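(* Let $\mathbb{F}$ be an arbitrary field. Let $P(t,y) \in \mathbb{F}[[t,y]]$ and $\varphi(t) \in \mathbb{F}[[t]]$ be formal power series such that $$P(t,y) = (y-\varphi(t))^e \cdot Q(t,y)$$ for some $Q \in \mathbb{F}[[t,y]]$ and some integer $e \ge 1$ that is invertible in $\mathbb{F}$. Suppose $\varphi(0)=0$ and $Q(0,0)\neq 0$. Then $$\varphi(t) = \mathcal{D}\left(\frac{y^2\cdot (\partial_y P)(ty,y)}{e\cdot P(ty,y)}\right),$$ where the quotient on the right-hand side is an element of $\mathbb{F}[[t,y]]$.
   Context: For a bivariate formal power series $F(t,y)=\sum_{i,j\ge 0}F_{i,j}t^iy^j$, the diagonal operator is $\mathcal{D}(F)(t) := \sum_{i\ge 0} F_{i,i}t^i$. Here $(\partial_y P)(ty,y)$ denotes the formal partial derivative of $P$ with respect to $y$, evaluated at $(ty,y)$. *)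

theory Defs
  imports "HOL-Computational_Algebra.Formal_Power_Series"
begin

unbundle fps_syntax

text \<open>Bivariate formal power series F[[t,y]] are represented as 'a fps fps:
  the outer variable is y (fps_X), the inner variable is t (fps_const fps_X).
  Thus the coefficient of t^i y^j in P is P $ j $ i.\<close>

definition subst_ty :: "'a::comm_ring_1 fps fps \<Rightarrow> 'a fps fps" where
  "subst_ty P = Abs_fps (\<lambda>j. Abs_fps (\<lambda>i. if i \<le> j then P $ (j - i) $ i else 0))"

definition diag :: "'a::comm_ring_1 fps fps \<Rightarrow> 'a fps" where
  "diag F = Abs_fps (\<lambda>i. F $ i $ i)"

end

theory Submission imports Defs begin
unbundle fps_syntax

lemma S_nth: "subst_ty F $ j $ i = (if i \<le> j then F $ (j-i) $ i else 0)"
  by (simp add: subst_ty_def)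

lemma S_mult: "subst_ty (F*G) = subst_ty F * subst_ty (G :: 'a::comm_ring_1 fps fps)"
proof (rule fps_ext, rule fps_ext)
  fix J i
  show "subst_ty (F*G) $ J $ i = (subst_ty F * subst_ty G) $ J $ i"
  proof (cases "i \<le> J")
    case True
    have L: "subst_ty (F*G) $ J $ i = (\<Sum>l=0..i. \<Sum>k=0..J-i. F$k$l * G$(J-i-k)$(i-l))"
      using True by (simp add: S_nth fps_mult_nth fps_sum_nth sum_distrib_left sum_distrib_right)
         (rule sum.swap)
    have R: "(subst_ty F * subst_ty G) $ J $ i = (\<Sum>l=0..i. \<Sum>m=0..J. (if l \<le> m then F$(m-l)$l else 0) * (if i-l \<le> J-m then G$(J-m-(i-l))$(i-l) else 0))"
      by (simp add: S_nth fps_mult_nth fps_sum_nth) (rule sum.swap)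
    have E: "(\<Sum>k=0..J-i. F$k$l * G$(J-i-k)$(i-l)) = (\<Sum>m=0..J. (if l \<le> m then F$(m-l)$l else 0) * (if i-l \<le> J-m then G$(J-m-(i-l))$(i-l) else 0))"
      if "l \<le> i" for l
    proof -
      have "(\<Sum>m=0..J. (if l \<le> m then F$(m-l)$l else 0) * (if i-l \<le> J-m then G$(J-m-(i-l))$(i-l) else 0))
          = (\<Sum>m=0+l..(J-i)+l. (if l \<le> m then F$(m-l)$l else 0) * (if i-l \<le> J-m then G$(J-m-(i-l))$(i-l) else 0))"
        using that True by (intro sum.mono_neutral_right) auto
      also have "\<dots> = (\<Sum>k=0..J-i. F$k$l * G$(J-i-k)$(i-l))"
        unfolding sum.shift_bounds_cl_nat_ivl using that True
        by (intro sum.cong) (auto simp: add.commute)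
      finally show ?thesis by simp
    qed
    show ?thesis unfolding L R by (rule sum.cong[OF refl], rule E) simp
  next
    case False
    then show ?thesis by (auto simp: S_nth fps_mult_nth fps_sum_nth intro!: sum.neutral)
  qed
qed

lemma S_add: "subst_ty (F+G) = subst_ty F + subst_ty G"
  by (rule fps_ext, rule fps_ext) (simp add: S_nth)
lemma S_diff: "subst_ty (F-G) = subst_ty F - subst_ty G"
  by (rule fps_ext, rule fps_ext) (simp add: S_nth)
lemma S_constc: "subst_ty (fps_const (fps_const a)) = fps_const (fps_const a)"
  by (rule fps_ext, rule fps_ext) (simp add: S_nth)
lemma S_one: "subst_ty 1 = 1"
  using S_constc[of 1] by simp
lemma S_of_nat: "subst_ty (of_nat n) = of_nat n"
  using S_constc[of "of_nat n"] by (simp add: fps_of_nat)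
lemma S_power: "subst_ty (F^n) = subst_ty F ^ n"
  by (induction n) (simp_all add: S_one S_mult)
lemma S_X: "subst_ty (fps_X :: 'a::comm_ring_1 fps fps) = fps_X"
  by (rule fps_ext, rule fps_ext) (auto simp: S_nth fps_X_def)

definition W :: "nat \<Rightarrow> 'a::comm_ring_1 fps fps \<Rightarrow> bool" where
  "W k F \<longleftrightarrow> (\<forall>j. fps_X ^ (j+k) dvd F $ j)"

lemma W_mult: assumes "W a F" "W b G" shows "W (a+b) (F*G)"
  unfolding W_def
proof
  fix n
  show "fps_X ^ (n + (a+b)) dvd (F*G) $ n"
    unfolding fps_mult_nth
  proof (rule dvd_sum)
    fix m assume "m \<in> {0..n}"
    then have "fps_X ^ (n + (a+b)) = fps_X ^ (m+a) * fps_X ^ (n-m+b)"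
      by (simp add: power_add[symmetric])
    then show "fps_X ^ (n + (a+b)) dvd F $ m * G $ (n-m)"
      using assms unfolding W_def by (metis mult_dvd_mono)
  qed
qed

lemma W_add: "W k F \<Longrightarrow> W k G \<Longrightarrow> W k (F+G)"
  unfolding W_def by simp
lemma W_mono: "W k F \<Longrightarrow> k' \<le> k \<Longrightarrow> W k' F"
  unfolding W_def by (meson add_le_cancel_left dvd_trans le_imp_power_dvd)
lemma W_diag: "W 1 F \<Longrightarrow> diag F = 0"
proof (rule fps_ext)
  fix n assume "W 1 F"
  then obtain k where "F $ n = fps_X ^ (n+1) * k" unfolding W_def by (meson dvdE)
  then show "diag F $ n = 0 $ n"
    using fps_X_power_mult_nth[of "n+1" k n] by (simp add: diag_def del: power_Suc)
qed

lemma diag_add: "diag (F+G) = diag F + diag G"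
  by (simp add: diag_def fps_ext)


lemma W_inv:
  fixes U C :: "'a::field fps fps"
  assumes WU: "W 1 U" and inv: "(1 - U) * C = 1"
  shows "W 0 C"
proof -
  obtain k where k: "U $ 0 = fps_X ^ 1 * k" using WU unfolding W_def by (metis add_0 dvdE)
  have "U $ 0 $ 0 = 0" using k by simp
  then have u0: "is_unit ((1-U) $ 0)" by simp
  have "fps_X ^ n dvd C $ n" for n
  proof (induction n rule: less_induct)
    case (less n)
    show ?case
    proof (cases n)
      case 0 then show ?thesis by simp
    next
      case (Suc m)
      have "((1-U)*C) $ n = 0" using inv Suc by simp
      hence "(\<Sum>i=0..n. (1-U)$i * C$(n-i)) = 0" by (simp add: fps_mult_nth)
      hence "(1-U)$0 * C$(n-0) + (\<Sum>i=Suc 0..n. (1-U)$i * C$(n-i)) = 0"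
        by (simp only: sum.atLeast_Suc_atMost[OF le0])
      hence eq: "(1-U)$0 * C$n = - (\<Sum>i=Suc 0..n. (1-U)$i * C$(n-i))"
        by (simp only: diff_zero eq_neg_iff_add_eq_0)
      have "fps_X ^ n dvd (\<Sum>i=Suc 0..n. (1-U)$i * C$(n-i))"
      proof (rule dvd_sum)
        fix i assume i: "i \<in> {Suc 0..n}"
        have "fps_X ^ (i+1) dvd U $ i" using WU unfolding W_def by simp
        then have a: "fps_X ^ i dvd (1-U) $ i" using i
          by (simp add: dvd_trans[OF le_imp_power_dvd[of i "i+1"]])
        have b: "fps_X ^ (n-i) dvd C $ (n-i)" using less i by simp
        have "fps_X ^ n = fps_X ^ i * fps_X ^ (n-i)" using i by (simp add: power_add[symmetric])
        then show "fps_X ^ n dvd (1-U)$i * C$(n-i)" using a b by (metis mult_dvd_mono)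
      qed
      then have "fps_X ^ n dvd (1-U)$0 * C$n" unfolding eq by simp
      then show ?thesis using u0 by (simp add: dvd_mult_unit_iff')
    qed
  qed
  then show ?thesis unfolding W_def by simp
qed

definition U :: "'a::comm_ring_1 fps \<Rightarrow> 'a fps fps" where
  "U \<phi> = Abs_fps (\<lambda>j. fps_const (\<phi>$(j+1)) * fps_X^(j+1))"

lemma W_U: "W 1 (U \<phi>)"
  unfolding W_def U_def by simp

lemma XU: "\<phi> $ 0 = 0 \<Longrightarrow> fps_X * U \<phi> = subst_ty (fps_const \<phi>)"
  by (rule fps_ext, rule fps_ext) (auto simp: U_def S_nth)

lemma W_XU: "\<phi> $ 0 = 0 \<Longrightarrow> W 0 (fps_X * U \<phi>)"
  unfolding W_def by (auto simp: U_def power_Suc[symmetric] simp del: power_Suc)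


theorem theorem3p1:
  fixes P Q :: "'a::field fps fps" and \<phi> :: "'a fps" and e :: nat
  assumes "e \<ge> 1" and "(of_nat e :: 'a) \<noteq> 0"
    and "P = (fps_X - fps_const \<phi>) ^ e * Q"
    and "\<phi> $ 0 = 0" and "Q $ 0 $ 0 \<noteq> 0"
  shows "(\<exists>R. of_nat e * subst_ty P * R = fps_X ^ 2 * subst_ty (fps_deriv P))
       \<and> (\<forall>R. of_nat e * subst_ty P * R = fps_X ^ 2 * subst_ty (fps_deriv P)
              \<longrightarrow> \<phi> = diag R)"
proof -
  note e1 = assms(1) and e0 = assms(2) and hP = assms(3) and phi0 = assms(4) and q0 = assms(5)
  obtain n where en: "e = Suc n" using e1 by (cases e) auto
  define A0 :: "'a fps fps" where "A0 = fps_X - fps_const \<phi>"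
  define B where "B = 1 - U \<phi>"
  define SQ where "SQ = subst_ty Q"
  define SQ' where "SQ' = subst_ty (fps_deriv Q)"
  have hdP: "fps_deriv P = of_nat e * A0^(e-1) * Q + A0^e * fps_deriv Q"
    unfolding hP A0_def[symmetric] by (simp add: fps_deriv_power' A0_def algebra_simps)
  have SA0: "subst_ty A0 = fps_X * B"
    unfolding A0_def B_def by (simp add: S_diff S_X XU[OF phi0, symmetric] algebra_simps)
  have SP: "subst_ty P = (fps_X * B)^e * SQ"
    unfolding hP A0_def[symmetric] SQ_def by (simp add: S_mult S_power SA0)
  have SdP: "subst_ty (fps_deriv P) = of_nat e * (fps_X * B)^(e-1) * SQ + (fps_X * B)^e * SQ'"
    unfolding hdP SQ_def SQ'_def by (simp add: S_mult S_power SA0 S_add S_of_nat)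
  define Qi where "Qi = fps_right_inverse Q (inverse (Q $ 0))"
  have "Q $ 0 * inverse (Q $ 0) = 1" using q0 by (simp add: inverse_mult_eq_1')
  then have QQi: "Q * Qi = 1" unfolding Qi_def by (rule fps_right_inverse)
  have SQQi: "SQ * subst_ty Qi = 1" unfolding SQ_def using QQi by (simp add: S_mult[symmetric] S_one)
  define C where "C = fps_right_inverse B (inverse (B $ 0))"
  have "U \<phi> $ 0 $ 0 = 0" by (simp add: U_def)
  then have "B $ 0 $ 0 \<noteq> 0" by (simp add: B_def)
  then have "B $ 0 * inverse (B $ 0) = 1" by (simp add: inverse_mult_eq_1')
  then have BC: "B * C = 1" unfolding C_def by (rule fps_right_inverse)
  define k :: "'a fps fps" where "k = fps_const (fps_const (inverse (of_nat e)))"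
  have ek: "of_nat e * k = 1"
  proof -
    have "(of_nat e :: 'a fps fps) = fps_const (fps_const (of_nat e))" by (simp add: fps_of_nat)
    moreover have "fps_const (fps_const (of_nat e :: 'a)) * fps_const (fps_const (inverse (of_nat e))) = 1"
      using e0 by (simp add: fps_const_mult)
    ultimately show ?thesis by (simp only: k_def)
  qed
  define R0 where "R0 = fps_X * C + fps_X^2 * (SQ' * subst_ty Qi * k)"
  have eqR0: "of_nat e * subst_ty P * R0 = fps_X ^ 2 * subst_ty (fps_deriv P)"
  proof -
    have "of_nat e * subst_ty P * R0 =
        of_nat e * fps_X^(n+2) * B^n * SQ * (B * C)
        + fps_X^(n+3) * B^(n+1) * SQ' * (SQ * subst_ty Qi) * (of_nat e * k)"
      unfolding SP R0_def en by (simp add: algebra_simps power_mult_distrib power_add eval_nat_numeral)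
    also have "\<dots> = of_nat e * fps_X^(n+2) * B^n * SQ + fps_X^(n+3) * B^(n+1) * SQ'"
      by (simp add: BC SQQi ek)
    also have "\<dots> = fps_X ^ 2 * subst_ty (fps_deriv P)"
      unfolding SdP en by (simp add: algebra_simps power_mult_distrib power_add eval_nat_numeral)
    finally show ?thesis .
  qed
  have diagR0: "diag R0 = \<phi>"
  proof -
    have WC: "W 0 C" using W_inv[OF W_U] BC unfolding B_def .
    have C1: "C = 1 + U \<phi> * C" using BC unfolding B_def by (simp add: algebra_simps)
    have s1: "fps_X * C = fps_X + fps_X * U \<phi> * C"
      using arg_cong[OF C1, of "\<lambda>z. fps_X * z"] by (simp add: distrib_left mult.assoc)
    have s2: "fps_X * U \<phi> * C = fps_X * U \<phi> + (fps_X * U \<phi>) * U \<phi> * C"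
      using arg_cong[OF C1, of "\<lambda>z. fps_X * U \<phi> * z"] by (simp add: distrib_left mult.assoc)
    have "fps_X * C = fps_X + fps_X * U \<phi> + (fps_X * U \<phi>) * U \<phi> * C"
      using s1 s2 by (simp add: add.assoc)
    also have "\<dots> = fps_X + subst_ty (fps_const \<phi>) + (fps_X * U \<phi>) * U \<phi> * C"
      using XU[OF phi0] by simp
    finally have XC: "fps_X * C = fps_X + subst_ty (fps_const \<phi>) + (fps_X * U \<phi>) * U \<phi> * C" .
    have "W (0+1+0) ((fps_X * U \<phi>) * U \<phi> * C)"
      by (intro W_mult W_XU[OF phi0] W_U WC)
    then have d3: "diag ((fps_X * U \<phi>) * U \<phi> * C) = 0" by (intro W_diag) simp
    have d1: "diag (fps_X :: 'a fps fps) = 0" by (rule fps_ext) (simp add: diag_def)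
    have d2: "diag (subst_ty (fps_const \<phi>)) = \<phi>" by (rule fps_ext) (simp add: diag_def S_nth)
    have "SQ' * subst_ty Qi * k = subst_ty (fps_deriv Q * Qi * k)"
      unfolding SQ'_def k_def by (simp add: S_mult S_constc)
    then have d4: "diag (fps_X^2 * (SQ' * subst_ty Qi * k)) = 0"
      by (intro fps_ext) (simp add: diag_def fps_X_power_mult_nth S_nth, arith)
    show ?thesis unfolding R0_def diag_add XC d1 d2 d3 d4 by simp
  qed
  have nz: "of_nat e * subst_ty P \<noteq> 0"
  proof -
    have "(of_nat e :: 'a fps fps) = fps_const (fps_const (of_nat e))"
      by (simp add: fps_of_nat)
    then have a: "(of_nat e :: 'a fps fps) \<noteq> 0" using e0 by simp
    have "B \<noteq> 0" using \<open>B $ 0 $ 0 \<noteq> 0\<close> by auto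
    moreover have "SQ \<noteq> 0" proof assume "SQ = 0" then have "SQ $ 0 $ 0 = 0" by simp
      then show False using q0 by (simp add: SQ_def S_nth) qed
    ultimately show ?thesis using a unfolding SP by simp
  qed
  show ?thesis
  proof (intro conjI exI allI impI)
    show "of_nat e * subst_ty P * R0 = fps_X ^ 2 * subst_ty (fps_deriv P)" by (rule eqR0)
  next
    fix R assume "of_nat e * subst_ty P * R = fps_X ^ 2 * subst_ty (fps_deriv P)"
    then have "of_nat e * subst_ty P * R = of_nat e * subst_ty P * R0" using eqR0 by simp
    then have "R = R0" using nz by (metis mult_left_cancel)
    then show "\<phi> = diag R" using diagR0 by simp
  qed
qed

end
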